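(* Fix $\sigma\in(0,\tfrac12)$. There exists $\lambda^{*}>0$ such that, denoting by $\overline{\Gamma_0(\lambda)}$ the closure of $\Gamma_0(\lambda)$ in $\mathbb{R}^2$: - for $\lambda\in(0,\lambda^{*})$, $\overline{\Gamma_0(\lambda)}\cap(\{0\}\times(-\infty,0))=\emptyset$; - for $\lambda=\lambda^{*}$, $\overline{\Gamma_0(\lambda)}\cap(\{0\}\times(-\infty,0))=\{(0,-\xi^{*})\}$ for some $\xi^{*}\in(0,+\infty)$; - for $\lambda>\lambda^{*}$, $\overline{\Gamma_0(\lambda)}\cap(\{0\}\times(-\infty,0))=\{(0,-\xi_0),(0,-\xi_1)\}$ for some $0<\xi_0<\xi_1$.
   Context: Let $g(s)=s^2(1-s)$ and $G(u)=u^3/3-u^4/4$ on $[0,1]$. For $\lambda>0$ and $s\in(0,1)$, let $(u_s,v_s)$ be the unique solution, on its maximal interval of existence, of $u'=v$, $v'=-\lambda g(u)$, $u(0)=s$, $v(0)=0$. Let $T_0(s)$ be the time taken by $(u_s,v_s)$ to go from $(s,0)$ to the half-line $\{0\}\times(-\infty,0)$ along the level line $v^2+2\lambda G(u)=2\lambda G(s)$, let $\mathcal{I}^0_\lambda=\{s\in(0,1):T_0(s)>\sigma\}$, and let $\Gamma_0(\lambda)=\{(u_s(\sigma),v_s(\sigma)): s\in\mathcal{I}^0_\lambda\}$. *)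

theory Defs
  imports "HOL-Analysis.Analysis"
begin

definition g :: "real \<Rightarrow> real" where
  "g s = s^2 * (1 - s)"

definition G :: "real \<Rightarrow> real" where
  "G u = u^3/3 - u^4/4"

definition solves :: "real \<Rightarrow> real \<Rightarrow> real \<Rightarrow> (real \<Rightarrow> real) \<Rightarrow> (real \<Rightarrow> real) \<Rightarrow> bool" where
  "solves lam s T u v \<longleftrightarrow> u 0 = s \<and> v 0 = 0 \<and>
     (\<forall>t\<in>{0..T}. (u has_real_derivative v t) (at t within {0..T}) \<and>
                  (v has_real_derivative (- lam * g (u t))) (at t within {0..T}))"

definition T0 :: "real \<Rightarrow> real \<Rightarrow> real" where
  "T0 lam s = (THE T. T > 0 \<and> (\<exists>u v. solves lam s T u v \<and> u T = 0 \<and> v T < 0 \<and>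
                                   (\<forall>t\<in>{0..<T}. u t \<noteq> 0 \<or> v t \<ge> 0)))"

definition I0 :: "real \<Rightarrow> real \<Rightarrow> real set" where
  "I0 lam \<sigma> = {s \<in> {0<..<1}. T0 lam s > \<sigma>}"

definition Gamma0 :: "real \<Rightarrow> real \<Rightarrow> (real \<times> real) set" where
  "Gamma0 lam \<sigma> = {(u \<sigma>, v \<sigma>) | s u v. s \<in> I0 lam \<sigma> \<and> solves lam s \<sigma> u v}"

end

theory Submission
  imports Defs
begin

definition Qf :: "real \<Rightarrow> real \<Rightarrow> real" where
  "Qf s x = (1+x+x^2)/3 - s*(1+x+x^2+x^3)/4"

definition ff :: "real \<Rightarrow> real \<Rightarrow> real" where
  "ff s r = 2 / sqrt (2 * s * Qf s (1 - r^2))"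

definition Th :: "real \<Rightarrow> real \<Rightarrow> real" where
  "Th s w = integral {-(6/5)..w} (ff s) - integral {-(6/5)..0} (ff s)"

definition tau :: "real \<Rightarrow> real" where "tau s = Th s 1"

lemma Qf_decomp: "Qf s x = (1-x)*(1+2*x+3*x^2)/12 + (1-s)*(1+x)*(1+x^2)/4"
  unfolding Qf_def by (simp add: field_simps power2_eq_square power3_eq_cube)

lemma Qf_pos: assumes "0<s" "s<1" "-1<x" "x\<le>1" shows "Qf s x > 0"
proof -
  have e: "1+2*x+3*x^2 = 3*(x+1/3)^2 + 2/3" by (simp add: power2_eq_square field_simps)
  have q: "1+2*x+3*x^2 > 0" unfolding e by (simp add: add_nonneg_pos)
  have a: "(1-x)*(1+2*x+3*x^2)/12 \<ge> 0" using assms q by simp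
  have b: "(1-s)*(1+x)*(1+x^2)/4 > 0" using assms by (simp add: add_pos_nonneg)
  show ?thesis using a b Qf_decomp by simp
qed

lemma Qf_pos_r: assumes "0<s" "s<1" "\<bar>r\<bar> \<le> 6/5" shows "Qf s (1-r^2) > 0"
proof -
  have "r^2 \<le> (6/5)^2" using assms(3) by (metis abs_le_square_iff power2_abs abs_of_nonneg 
     order.trans abs_ge_zero)
  then show ?thesis using assms by (intro Qf_pos) (auto simp: power2_eq_square)
qed

lemma G_diff: "G s - G (s*x) = s^3*(1-x)*Qf s x"
  unfolding G_def Qf_def by (simp add: field_simps power2_eq_square power3_eq_cube power4_eq_xxxx)

lemma Qf_deriv_id: "Qf s x - (1-x)*((1+2*x)/3 - s*(1+2*x+3*x^2)/4) = x^2*(1-s*x)"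
  unfolding Qf_def by (simp add: field_simps power2_eq_square power3_eq_cube)

lemma ff_pos: assumes "0<s" "s<1" "\<bar>r\<bar> \<le> 6/5" shows "ff s r > 0"
  using Qf_pos_r[OF assms] assms unfolding ff_def by simp

lemma cont_ff: assumes "0<s" "s<1" shows "continuous_on {-(6/5)..6/5} (ff s)"
proof -
  have "\<forall>r\<in>{-(6/5)..6/5}. sqrt (2 * s * Qf s (1 - r^2)) \<noteq> 0"
  proof
    fix r :: real assume "r \<in> {-(6/5)..6/5}"
    then have "\<bar>r\<bar> \<le> 6/5" by auto
    then have "Qf s (1 - r^2) > 0" by (rule Qf_pos_r[OF assms])
    then show "sqrt (2 * s * Qf s (1 - r^2)) \<noteq> 0" using assms by simp
  qed
  then show ?thesis unfolding ff_def Qf_def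
    by (intro continuous_intros) auto
qed

lemma ff_integrable: assumes "0<s" "s<1" "-(6/5) \<le> a" "b \<le> 6/5" shows "ff s integrable_on {a..b}"
  by (rule integrable_continuous_interval, rule continuous_on_subset[OF cont_ff[OF assms(1,2)]]) (use assms in auto)

lemma Th_deriv: assumes "0<s" "s<1" "-(6/5) < w" "w < 6/5"
  shows "(Th s has_real_derivative ff s w) (at w)"
proof -
  have "((\<lambda>x. integral {-(6/5)..x} (ff s)) has_real_derivative ff s w) (at w within {-(6/5)..6/5})"
    by (rule integral_has_real_derivative[OF cont_ff[OF assms(1,2)]]) (use assms in auto)
  then have "((\<lambda>x. integral {-(6/5)..x} (ff s)) has_real_derivative ff s w) (at w)"
    using assms by (simp add: at_within_Icc_at)
  then show ?thesis unfolding Th_def[abs_def] by (auto intro!: derivative_eq_intros)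
qed

lemma Th_cont: assumes "0<s" "s<1" shows "continuous_on {-(6/5)<..<6/5} (Th s)"
  using Th_deriv[OF assms] by (meson DERIV_isCont continuous_at_imp_continuous_on greaterThanLessThan_iff)

lemma Th_zero: "Th s 0 = 0" unfolding Th_def by simp

lemma Th_eq_int: assumes "0<s" "s<1" "0 \<le> w" "w \<le> 6/5" shows "Th s w = integral {0..w} (ff s)"
  using Henstock_Kurzweil_Integration.integral_combine[where a="-(6/5)" and c=0 and b=w and f="ff s"] ff_integrable[OF assms(1,2)] assms unfolding Th_def
  by auto

lemma Th_strict_mono: assumes "0<s" "s<1" "-(6/5) < a" "a < b" "b < 6/5" shows "Th s a < Th s b"
proof -
  have "Th s b - Th s a > 0"
  proof -
    have "\<exists>y. (Th s has_real_derivative y) (at x) \<and> y > 0" if "a<x" "x<b" for x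
      using Th_deriv[OF assms(1,2), of x] ff_pos[OF assms(1,2), of x] that assms by auto
    moreover have "continuous_on {a..b} (Th s)"
      by (rule continuous_on_subset[OF Th_cont[OF assms(1,2)]]) (use assms in auto)
    ultimately have "Th s a < Th s b" using DERIV_pos_imp_increasing_open[of a b "Th s"] assms by blast
    then show ?thesis by simp
  qed
  then show ?thesis by simp
qed

lemma Th_mono_le: assumes "0<s" "s<1" "-(6/5) < a" "a \<le> b" "b < 6/5" shows "Th s a \<le> Th s b"
  using Th_strict_mono[OF assms(1,2,3) _ assms(5)] assms(4) by (cases "a = b") auto

definition Wi :: "real \<Rightarrow> real \<Rightarrow> real" where
  "Wi s y = (THE w. -1 < w \<and> w < 11/10 \<and> Th s w = y)"

lemma Th_inj: assumes "0<s" "s<1" "-(6/5) < a" "a < 6/5" "-(6/5) < b" "b < 6/5" "Th s a = Th s b"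
  shows "a = b"
  using Th_strict_mono[OF assms(1,2), of a b] Th_strict_mono[OF assms(1,2), of b a] assms
  by (cases a b rule: linorder_cases) auto

lemma Wi_props: assumes "0<s" "s<1" "Th s (-1) < y" "y < Th s (11/10)"
  shows "-1 < Wi s y \<and> Wi s y < 11/10 \<and> Th s (Wi s y) = y"
proof -
  have "continuous_on {-1..11/10} (Th s)"
    by (rule continuous_on_subset[OF Th_cont[OF assms(1,2)]]) auto
  then obtain w where w: "-1 \<le> w" "w \<le> 11/10" "Th s w = y"
    using IVT'[of "Th s" "-1" y "11/10"] assms by auto
  have "w \<noteq> -1" "w \<noteq> 11/10" using w(3) assms(3,4) by (metis less_irrefl)+
  then have w2: "-1 < w" "w < 11/10" using w by auto
  have "Wi s y = w" unfolding Wi_def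
  proof (rule the_equality)
    show "-1 < w \<and> w < 11/10 \<and> Th s w = y" using w w2 by auto
    fix w' assume "-1 < w' \<and> w' < 11/10 \<and> Th s w' = y"
    then show "w' = w" using Th_inj[OF assms(1,2), of w' w] w w2 by auto
  qed
  then show ?thesis using w w2 by auto
qed

lemma Wi_Th: assumes "0<s" "s<1" "-1 < w" "w < 11/10" shows "Wi s (Th s w) = w"
proof -
  have "Th s (-1) < Th s w" "Th s w < Th s (11/10)"
    using Th_strict_mono[OF assms(1,2)] assms by auto
  then have "-1 < Wi s (Th s w) \<and> Wi s (Th s w) < 11/10 \<and> Th s (Wi s (Th s w)) = Th s w"
    using Wi_props[OF assms(1,2)] by blast
  then show ?thesis using Th_inj[OF assms(1,2), of "Wi s (Th s w)" w] assms by auto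
qed

lemma Wi_deriv: assumes "0<s" "s<1" "Th s (-1) < y" "y < Th s (11/10)"
  shows "(Wi s has_real_derivative inverse (ff s (Wi s y))) (at y)"
proof -
  let ?x = "Wi s y"
  have x: "-1 < ?x" "?x < 11/10" "Th s ?x = y" using Wi_props[OF assms] by auto
  define d where "d = min (?x + 1) (11/10 - ?x) / 2"
  have d: "0 < d" using x by (simp add: d_def)
  have ic: "isCont (Wi s) (Th s ?x)"
  proof (rule isCont_inverse_function[where f="Th s" and g="Wi s" and x="?x", OF d])
    fix z assume "\<bar>z - ?x\<bar> \<le> d"
    then have "-d \<le> z - ?x" "z - ?x \<le> d" by (simp_all add: abs_le_iff)
    moreover have "d \<le> (?x+1)/2" "d \<le> (11/10-?x)/2" by (auto simp: d_def)
    ultimately have z: "-1 < z" "z < 11/10" using x(1,2) by (simp_all add: field_simps)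
    show "Wi s (Th s z) = z" by (rule Wi_Th[OF assms(1,2) z])
    show "isCont (Th s) z" using Th_deriv[OF assms(1,2), of z] z DERIV_isCont by auto
  qed
  show ?thesis
  proof (rule DERIV_inverse_function[where f="Th s" and a="Th s (-1)" and b="Th s (11/10)"])
    show "(Th s has_real_derivative ff s ?x) (at (Wi s y))" using Th_deriv[OF assms(1,2)] x by auto
    have "\<bar>?x\<bar> \<le> 6/5" using x(1,2) by (intro abs_leI) auto
    then show "ff s ?x \<noteq> 0" using ff_pos[OF assms(1,2), of ?x] by auto
    show "Th s (-1) < y" "y < Th s (11/10)" by fact+
    show "Th s (Wi s z) = z" if "Th s (-1) < z" "z < Th s (11/10)" for z
      using Wi_props[OF assms(1,2) that] by auto
    show "isCont (Wi s) y" using ic x by simp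
  qed
qed

definition Wt :: "real \<Rightarrow> real \<Rightarrow> real \<Rightarrow> real" where "Wt lam s t = Wi s (sqrt lam * t)"
definition Ut :: "real \<Rightarrow> real \<Rightarrow> real \<Rightarrow> real" where "Ut lam s t = s * (1 - (Wt lam s t)^2)"
definition Vt :: "real \<Rightarrow> real \<Rightarrow> real \<Rightarrow> real" where
  "Vt lam s t = - s * Wt lam s t * sqrt (2 * lam * s * Qf s (1 - (Wt lam s t)^2))"

lemma sol_deriv: assumes "0<lam" "0<s" "s<1" "Th s (-1) < sqrt lam * t" "sqrt lam * t < Th s (11/10)"
  shows "(Ut lam s has_real_derivative Vt lam s t) (at t)"
    "(Vt lam s has_real_derivative (-lam * g (Ut lam s t))) (at t)"
proof -
  define w where "w = Wt lam s t"
  define x where "x = 1 - w^2"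
  define q where "q = Qf s x"
  define R where "R = sqrt (2 * lam * s * q)"
  have w: "-1 < w" "w < 11/10" using Wi_props[OF assms(2-5)] unfolding w_def Wt_def by auto
  have "\<bar>w\<bar> \<le> 6/5" using w by (intro abs_leI) auto
  then have q: "q > 0" unfolding q_def x_def using Qf_pos_r[OF assms(2,3)] by auto
  have R: "R > 0" using q assms unfolding R_def by simp
  have R2: "R^2 = 2 * lam * s * q" using q assms unfolding R_def by simp
  have dWi: "(Wi s has_real_derivative inverse (ff s w)) (at (sqrt lam * t))"
    using Wi_deriv[OF assms(2-5)] unfolding w_def Wt_def .
  have "inverse (ff s w) * sqrt lam = R/2"
  proof -
    have "inverse (ff s w) = sqrt (2 * s * q) / 2" unfolding ff_def q_def x_def by simp
    moreover have "sqrt (2 * s * q) * sqrt lam = R" unfolding R_def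
      by (simp add: real_sqrt_mult[symmetric] algebra_simps)
    ultimately show ?thesis by (metis times_divide_eq_left)
  qed
  then have dW: "(Wt lam s has_real_derivative R/2) (at t)"
    unfolding Wt_def[abs_def] using DERIV_chain2[where f="Wi s" and g="\<lambda>t. sqrt lam * t" and x=t and Db="sqrt lam", OF dWi]
    by (auto intro!: derivative_eq_intros)
  show "(Ut lam s has_real_derivative Vt lam s t) (at t)"
    unfolding Ut_def[abs_def]
    apply (rule derivative_eq_intros refl dW)+
    unfolding Vt_def w_def[symmetric] x_def[symmetric] q_def[symmetric] R_def[symmetric]
    by simp
  define Qx where "Qx = (1+2*x)/3 - s*(1+2*x+3*x^2)/4"
  define dq where "dq = Qx * (-(2*w*(R/2)))"
  have dQ: "((\<lambda>t. Qf s (1 - (Wt lam s t)^2)) has_real_derivative dq) (at t)"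
    unfolding Qf_def dq_def Qx_def x_def
    by (auto intro!: derivative_eq_intros dW simp: w_def[symmetric] field_simps power2_eq_square power3_eq_cube)
  have dI: "((\<lambda>t. (2*lam* s) * Qf s (1 - (Wt lam s t)^2)) has_real_derivative (2*lam* s)*dq) (at t)"
    by (rule DERIV_cmult[OF dQ])
  have pos: "0 < (2*lam* s) * Qf s (1 - (Wt lam s t)^2)"
    using q assms unfolding q_def x_def w_def by simp
  have dR: "((\<lambda>t. sqrt ((2*lam* s) * Qf s (1 - (Wt lam s t)^2))) has_real_derivative
      inverse (sqrt ((2*lam* s) * Qf s (1 - (Wt lam s t)^2))) / 2 * ((2*lam* s)*dq)) (at t)"
    by (rule DERIV_chain2[OF DERIV_real_sqrt[OF pos] dI])
  have dm: "((\<lambda>t. - s * Wt lam s t) has_real_derivative (- s * (R/2))) (at t)"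
    by (rule DERIV_cmult[OF dW])
  have dV: "((\<lambda>t. (- s * Wt lam s t) * sqrt ((2*lam* s) * Qf s (1 - (Wt lam s t)^2))) has_real_derivative
      (- s * (R/2)) * R + (inverse R / 2 * ((2*lam* s)*dq)) * (- s * w)) (at t)"
    using DERIV_mult[OF dm dR] unfolding w_def[symmetric] x_def[symmetric] q_def[symmetric] R_def[symmetric] .
  have eq: "(- s * (R/2)) * R + (inverse R / 2 * ((2*lam* s)*dq)) * (- s * w) = -lam * g (Ut lam s t)"
  proof -
    have "(- s * (R/2)) * R + (inverse R / 2 * ((2*lam* s)*dq)) * (- s * w)
       = - s * R^2 / 2 + lam * s^2 * w^2 * Qx * (R / R)"
      unfolding dq_def by (simp add: field_simps power2_eq_square)
    also have "\<dots> = - lam * s^2 * (q - (1-x) * Qx)"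
      using R unfolding R2 x_def by (simp add: field_simps power2_eq_square)
    also have "\<dots> = - lam * s^2 * (x^2 * (1 - s*x))"
      unfolding q_def Qx_def using Qf_deriv_id[of s x] by simp
    also have "\<dots> = -lam * g (Ut lam s t)"
      unfolding g_def Ut_def w_def[symmetric] x_def[symmetric] by (simp add: power2_eq_square algebra_simps)
    finally show ?thesis .
  qed
  show "(Vt lam s has_real_derivative (-lam * g (Ut lam s t))) (at t)"
    using dV unfolding eq Vt_def[abs_def] by (simp add: mult.assoc)
qed

lemma G_deriv: "(G has_real_derivative g x) (at x)"
  unfolding G_def[abs_def] g_def
  by (auto intro!: derivative_eq_intros simp: power2_eq_square power3_eq_cube algebra_simps)

lemma G_strict_mono: assumes "a < b" "b \<le> 1" shows "G a < G b"
proof -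
  have gpos: "g x > 0" if "x < 1" "x \<noteq> 0" for x using that unfolding g_def by simp
  have cont: "continuous_on {p..q} G" for p q
    using G_deriv by (meson DERIV_isCont continuous_at_imp_continuous_on)
  have inc: "G p < G q" if "p < q" "q \<le> 1" "0 \<notin> {p<..<q}" for p q
  proof -
    have "\<exists>y. (G has_real_derivative y) (at x) \<and> 0 < y" if "p < x" "x < q" for x
      using G_deriv[of x] gpos[of x] that \<open>q \<le> 1\<close> \<open>0 \<notin> {p<..<q}\<close> by auto
    then show ?thesis using DERIV_pos_imp_increasing_open[OF \<open>p<q\<close> _ cont] by blast
  qed
  show ?thesis
  proof (cases "0 \<in> {a<..<b}")
    case True
    then have "G a < G 0" "G 0 < G b" using inc[of a 0] inc[of 0 b] assms by auto
    then show ?thesis by simp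
  next
    case False then show ?thesis using inc assms by auto
  qed
qed

lemma solves_mono: assumes "solves lam s T u v" "T' \<le> T" shows "solves lam s T' u v"
proof -
  have "t \<in> {0..T'} \<Longrightarrow> t \<in> {0..T}" for t using assms(2) by auto
  moreover have "{0..T'} \<subseteq> {0..T}" using assms(2) by auto
  ultimately show ?thesis using assms(1) unfolding solves_def by (meson DERIV_subset)
qed

lemma solves_cont: assumes "solves lam s T u v" shows "continuous_on {0..T} u" "continuous_on {0..T} v"
  using assms unfolding solves_def continuous_on_eq_continuous_within by (auto intro: DERIV_continuous)

lemma solves_at: assumes "solves lam s T u v" "0 < t" "t < T"
  shows "(u has_real_derivative v t) (at t)" "(v has_real_derivative (- lam * g (u t))) (at t)"
proof -
  have "t \<in> {0..T}" using assms by auto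
  then have "(u has_real_derivative v t) (at t within {0..T})"
    "(v has_real_derivative (- lam * g (u t))) (at t within {0..T})"
    using assms(1) unfolding solves_def by auto
  then show "(u has_real_derivative v t) (at t)" "(v has_real_derivative (- lam * g (u t))) (at t)"
    using at_within_Icc_at[of 0 t T] assms(2,3) by auto
qed

lemma energy: assumes "solves lam s T u v" "t \<in> {0..T}"
  shows "(v t)^2 + 2*lam*G (u t) = 2*lam*G s"
proof -
  have "\<exists>c. \<forall>x\<in>{0..T}. (v x)^2 + 2*lam*G (u x) = c"
  proof (rule has_field_derivative_zero_constant)
    fix x assume x: "x \<in> {0..T}"
    then have du: "(u has_real_derivative v x) (at x within {0..T})"
      and dv: "(v has_real_derivative (- lam * g (u x))) (at x within {0..T})"
      using assms(1) unfolding solves_def by auto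
    show "((\<lambda>x. (v x)^2 + 2*lam*G (u x)) has_real_derivative 0) (at x within {0..T})"
      by (rule derivative_eq_intros DERIV_chain2[OF G_deriv] du dv refl | simp)+
  qed auto
  then obtain c where c: "\<forall>x\<in>{0..T}. (v x)^2 + 2*lam*G (u x) = c" by blast
  have "0 \<le> T" using assms(2) by auto
  then have "(v 0)^2 + 2*lam*G (u 0) = c" using c by auto
  then show ?thesis using c assms unfolding solves_def by auto
qed

lemma vneg: assumes "0<lam" "0<s" "s<1" "solves lam s T u v" "0 < t" "t \<le> T" shows "v t < 0"
proof (rule ccontr)
  assume "\<not> v t < 0" then have vt: "0 \<le> v t" by simp
  have u0: "u 0 = s" and v0: "v 0 = 0" using assms(4) unfolding solves_def by auto
  have "0 \<in> {0..T}" using assms by auto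
  then have d0: "(v has_real_derivative (- lam * g s)) (at 0 within {0..T})"
    using assms(4) u0 unfolding solves_def by auto
  have "g s > 0" using assms unfolding g_def by simp
  then have "- lam * g s < 0" using assms by simp
  from has_real_derivative_neg_dec_right[OF d0 this] obtain d where d: "d > 0"
    "\<And>h. h > 0 \<Longrightarrow> 0 + h \<in> {0..T} \<Longrightarrow> h < d \<Longrightarrow> v 0 > v (0 + h)" by blast
  have small: "v h < 0" if "0 < h" "h < d" "h \<le> T" for h using d(2)[of h] that v0 by auto
  define a where "a = min d t / 2"
  have a: "0 < a" "a < t" "a < d" using d assms by (auto simp: a_def)
  have va: "v a < 0" using small a assms by auto
  have cv: "continuous_on {0..T} v" "continuous_on {0..T} u" using solves_cont[OF assms(4)] by auto
  have cva: "continuous_on {a..t} v" by (rule continuous_on_subset[OF cv(1)]) (use a assms in auto)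
  define S where "S = {x \<in> {a..t}. (\<lambda>_. 0) x \<le> v x}"
  have "closed S" unfolding S_def
    by (rule continuous_on_closed_Collect_le[OF continuous_on_const cva closed_atLeastAtMost])
  moreover have "bounded S" unfolding S_def by (rule bounded_subset[OF bounded_closed_interval]) auto
  ultimately have "compact S" by (simp add: compact_eq_bounded_closed)
  moreover have "t \<in> S" using vt a unfolding S_def by auto
  ultimately obtain t1 where t1: "t1 \<in> S" "\<And>y. y \<in> S \<Longrightarrow> t1 \<le> y"
    using continuous_attains_inf[of S "\<lambda>x. x"] by (auto intro: continuous_on_id)
  have t1b: "a \<le> t1" "t1 \<le> t" "0 \<le> v t1" using t1 unfolding S_def by auto
  have neg: "v x < 0" if "0 < x" "x < t1" for x
  proof (cases "x < a")
    case True then show ?thesis using small[of x] a that t1b assms by auto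
  next
    case False
    then have "x \<notin> S" using t1(2)[of x] that by auto
    then show ?thesis using False that t1b unfolding S_def by auto
  qed
  have "a < t1" using t1b va by (cases "a = t1") auto
  have "u t1 < u 0"
  proof (rule DERIV_neg_imp_decreasing_open[where f=u and a=0 and b=t1])
    show "0 < t1" using a \<open>a < t1\<close> by simp
    show "\<exists>y. (u has_real_derivative y) (at x) \<and> y < 0" if "0 < x" "x < t1" for x
      using solves_at(1)[OF assms(4), of x] neg[of x] that t1b assms by auto
    show "continuous_on {0..t1} u" by (rule continuous_on_subset[OF cv(2)]) (use t1b assms in auto)
  qed
  then have "G (u t1) < G s" using G_strict_mono[of "u t1" s] u0 assms by auto
  moreover have "(v t1)^2 + 2*lam*G (u t1) = 2*lam*G s" using energy[OF assms(4), of t1] t1b a assms by auto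
  ultimately have "(v t1)^2 > 0" using assms(1) by (smt (verit) mult_strict_left_mono)
  then have vt1: "v t1 > 0" using t1b by (cases "v t1 = 0") auto
  have "continuous_on {a..t1} v" by (rule continuous_on_subset[OF cv(1)]) (use a t1b assms in auto)
  then obtain x where x: "a \<le> x" "x \<le> t1" "v x = 0" using IVT'[of v a 0 t1] va vt1 \<open>a < t1\<close> by auto
  then have "x \<in> S" using t1b unfolding S_def by auto
  then have "t1 \<le> x" using t1(2) by auto
  then show False using x vt1 by auto
qed

lemma u_decr: assumes "0<lam" "0<s" "s<1" "solves lam s T u v" "0 \<le> a" "a < b" "b \<le> T"
  shows "u b < u a"
proof (rule DERIV_neg_imp_decreasing_open[where f=u and a=a and b=b])
  show "a < b" by fact
  show "\<exists>y. (u has_real_derivative y) (at x) \<and> y < 0" if "a < x" "x < b" for x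
    using solves_at(1)[OF assms(4), of x] vneg[OF assms(1-4), of x] that assms by auto
  show "continuous_on {a..b} u" by (rule continuous_on_subset[OF solves_cont(1)[OF assms(4)]]) (use assms in auto)
qed

lemma time_id: assumes "0<lam" "0<s" "s<1" "solves lam s T u v" "\<forall>t\<in>{0..T}. 0 \<le> u t" "t \<in> {0..T}"
  shows "Th s (sqrt (1 - u t / s)) = sqrt lam * t"
proof (cases "t = 0")
  case True
  then show ?thesis using assms(2,4) Th_zero unfolding solves_def by auto
next
  case False
  then have t: "0 < t" "t \<le> T" using assms(6) by auto
  have u0: "u 0 = s" using assms(4) unfolding solves_def by auto
  have ule: "u x \<le> s" if "x \<in> {0..T}" for x
    using u_decr[OF assms(1-4), of 0 x] that u0 by (cases "x = 0") auto
  define psi where "psi x = Th s (sqrt (1 - u x / s)) - sqrt lam * x" for x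
  have "psi t = psi 0"
  proof (rule DERIV_isconst_end[OF t(1)])
    have c1: "continuous_on {0..t} (\<lambda>x. sqrt (1 - u x / s))"
      by (intro continuous_intros continuous_on_subset[OF solves_cont(1)[OF assms(4)]]) (use t assms(2) in auto)
    have "(\<lambda>x. sqrt (1 - u x / s)) ` {0..t} \<subseteq> {-(6/5)<..<6/5}"
    proof
      fix y assume "y \<in> (\<lambda>x. sqrt (1 - u x / s)) ` {0..t}"
      then obtain x where x: "x \<in> {0..t}" "y = sqrt (1 - u x / s)" by auto
      have "0 \<le> u x" "u x \<le> s" using assms(5) ule x t by auto
      then have "0 \<le> 1 - u x / s" "1 - u x / s \<le> 1" using assms(2) by (auto simp: field_simps)
      then have "0 \<le> y" "y \<le> 1" using x by auto
      then show "y \<in> {-(6/5)<..<6/5}" by auto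
    qed
    then have "continuous_on {0..t} (\<lambda>x. Th s (sqrt (1 - u x / s)))"
      using continuous_on_compose2[OF Th_cont[OF assms(2,3)] c1] by auto
    then show "continuous_on {0..t} psi" unfolding psi_def[abs_def] by (intro continuous_intros)
  next
    fix x assume x: "0 < x" "x < t"
    have du: "(u has_real_derivative v x) (at x)" using solves_at(1)[OF assms(4), of x] x t by auto
    have vx: "v x < 0" using vneg[OF assms(1-4), of x] x t by auto
    have ux: "u x < s" using u_decr[OF assms(1-4), of 0 x] x t u0 by auto
    have ux0: "0 \<le> u x" using assms(5) x t by auto
    define w where "w = sqrt (1 - u x / s)"
    have pos: "0 < 1 - u x / s" using ux assms(2) by (auto simp: field_simps)
    then have w: "0 < w" "w \<le> 1" using ux0 assms(2) unfolding w_def by auto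
    have w2: "w^2 = 1 - u x / s" using pos unfolding w_def by simp
    define Q where "Q = Qf s (1 - w^2)"
    have Q: "Q > 0" unfolding Q_def using Qf_pos_r[OF assms(2,3), of w] w by auto
    have en: "(v x)^2 = 2*lam*(G s - G (u x))" using energy[OF assms(4), of x] x t by (auto simp: algebra_simps)
    have "G s - G (u x) = G s - G (s * (u x / s))" using assms(2) by simp
    also have "\<dots> = s^3 * (1 - u x / s) * Qf s (u x / s)" by (rule G_diff)
    also have "\<dots> = s^3 * w^2 * Q" unfolding Q_def w2 by simp
    finally have en2: "(v x)^2 = (s * w * sqrt (2*lam* s*Q))^2"
      using en Q assms(1,2) by (simp add: power_mult_distrib power2_eq_square power3_eq_cube algebra_simps)
    have "- v x = s * w * sqrt (2*lam* s*Q)"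
    proof -
      have "(- v x)^2 = (s * w * sqrt (2*lam* s*Q))^2" using en2 by simp
      moreover have "0 \<le> - v x" "0 \<le> s * w * sqrt (2*lam* s*Q)" using vx w assms(1,2) Q by auto
      ultimately show ?thesis using power2_eq_iff_nonneg by blast
    qed
    also have "\<dots> = s * w * sqrt lam * sqrt (2* s*Q)" by (simp add: real_sqrt_mult[symmetric] algebra_simps)
    finally have vv: "- v x = s * w * sqrt lam * sqrt (2* s*Q)" .
    have din: "((\<lambda>x. 1 - u x / s) has_real_derivative (- v x / s)) (at x)"
      using assms(2) by (auto intro!: derivative_eq_intros du)
    have dsq: "((\<lambda>x. sqrt (1 - u x / s)) has_real_derivative inverse (sqrt (1 - u x / s)) / 2 * (- v x / s)) (at x)"
      by (rule DERIV_chain2[OF DERIV_real_sqrt[OF pos] din])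
    have "-(6/5) < w" "w < 6/5" using w by auto
    then have thd: "(Th s has_real_derivative ff s w) (at (sqrt (1 - u x / s)))"
      using Th_deriv[OF assms(2,3)] unfolding w_def by blast
    from DERIV_chain2[OF thd dsq]
    have dT: "((\<lambda>x. Th s (sqrt (1 - u x / s))) has_real_derivative ff s w * (inverse w / 2 * (- v x / s))) (at x)"
      unfolding w_def .
    have "ff s w * (inverse w / 2 * (- v x / s)) = sqrt lam"
      unfolding vv ff_def Q_def[symmetric] using w assms(2) Q by (simp add: field_simps)
    then show "(psi has_real_derivative 0) (at x)" unfolding psi_def[abs_def] using dT
      by (auto intro!: derivative_eq_intros)
  qed
  then show ?thesis using u0 Th_zero assms(2) unfolding psi_def by simp
qed

lemma tau_pos: assumes "0<s" "s<1" shows "0 < tau s"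
  using Th_strict_mono[OF assms, of 0 1] Th_zero unfolding tau_def by auto

lemma in_range: assumes "0<s" "s<1" "0 \<le> y" "y \<le> tau s" shows "Th s (-1) < y" "y < Th s (11/10)"
  using Th_strict_mono[OF assms(1,2), of "-1" 0] Th_strict_mono[OF assms(1,2), of 1 "11/10"] Th_zero assms
  unfolding tau_def by auto

lemma Wt0: assumes "0<s" "s<1" shows "Wt lam s 0 = 0"
  using Wi_Th[OF assms, of 0] Th_zero unfolding Wt_def by auto

lemma Ut_sol: assumes "0<lam" "0<s" "s<1" "sqrt lam * T \<le> tau s"
  shows "solves lam s T (Ut lam s) (Vt lam s)"
  unfolding solves_def
proof (intro conjI ballI)
  show "Ut lam s 0 = s" "Vt lam s 0 = 0" unfolding Ut_def Vt_def using Wt0[OF assms(2,3)] by auto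
  fix t assume t: "t \<in> {0..T}"
  then have "0 \<le> sqrt lam * t" "sqrt lam * t \<le> tau s" using assms
    by (auto intro: order.trans[OF mult_left_mono[of t T "sqrt lam"]])
  note r = in_range[OF assms(2,3) this]
  show "(Ut lam s has_real_derivative Vt lam s t) (at t within {0..T})"
    using sol_deriv(1)[OF assms(1-3) r] by (rule has_field_derivative_at_within)
  show "(Vt lam s has_real_derivative - lam * g (Ut lam s t)) (at t within {0..T})"
    using sol_deriv(2)[OF assms(1-3) r] by (rule has_field_derivative_at_within)
qed

lemma Wt_range: assumes "0<s" "s<1" "0 \<le> sqrt lam * t" "sqrt lam * t < tau s"
  shows "0 \<le> Wt lam s t" "Wt lam s t < 1" "Th s (Wt lam s t) = sqrt lam * t"
proof -
  have r: "Th s (-1) < sqrt lam * t" "sqrt lam * t < Th s (11/10)" using in_range[OF assms(1,2)] assms by auto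
  have p: "-1 < Wt lam s t" "Wt lam s t < 11/10" "Th s (Wt lam s t) = sqrt lam * t"
    using Wi_props[OF assms(1,2) r] unfolding Wt_def by auto
  show "Th s (Wt lam s t) = sqrt lam * t" by (fact p(3))
  show "0 \<le> Wt lam s t"
  proof (rule ccontr)
    assume "\<not> 0 \<le> Wt lam s t"
    then have "Th s (Wt lam s t) < Th s 0" using Th_strict_mono[OF assms(1,2), of "Wt lam s t" 0] p by auto
    then show False using p(3) assms Th_zero by auto
  qed
  show "Wt lam s t < 1"
  proof (rule ccontr)
    assume "\<not> Wt lam s t < 1"
    then have "Th s 1 \<le> Th s (Wt lam s t)" using Th_mono_le[OF assms(1,2), of 1 "Wt lam s t"] p by auto
    then show False using p(3) assms unfolding tau_def by auto
  qed
qed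

lemma T0_eq: assumes "0<lam" "0<s" "s<1" shows "T0 lam s = tau s / sqrt lam"
  unfolding T0_def
proof (rule the_equality)
  define T where "T = tau s / sqrt lam"
  have sT: "sqrt lam * T = tau s" using assms unfolding T_def by simp
  have T: "T > 0" using tau_pos[OF assms(2,3)] assms unfolding T_def by simp
  have W1: "Wt lam s T = 1" unfolding Wt_def sT tau_def using Wi_Th[OF assms(2,3), of 1] by simp
  have Q0: "Qf s 0 > 0" using Qf_pos[OF assms(2,3), of 0] by simp
  show "tau s / sqrt lam > 0 \<and> (\<exists>u v. solves lam s (tau s / sqrt lam) u v \<and> u (tau s / sqrt lam) = 0 \<and>
      v (tau s / sqrt lam) < 0 \<and> (\<forall>t\<in>{0..<tau s / sqrt lam}. u t \<noteq> 0 \<or> 0 \<le> v t))"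
    unfolding T_def[symmetric]
  proof (intro conjI exI ballI disjI1)
    show "T > 0" by fact
    show "solves lam s T (Ut lam s) (Vt lam s)" using Ut_sol[OF assms] sT by simp
    show "Ut lam s T = 0" unfolding Ut_def W1 by simp
    show "Vt lam s T < 0" unfolding Vt_def W1 using assms Q0 by simp
    fix t assume t: "t \<in> {0..<T}"
    then have "0 \<le> sqrt lam * t" "sqrt lam * t < sqrt lam * T" using assms by auto
    then have "0 \<le> sqrt lam * t" "sqrt lam * t < tau s" using sT by auto
    then have "Wt lam s t < 1" "0 \<le> Wt lam s t" using Wt_range[OF assms(2,3)] by auto
    then have "(Wt lam s t)^2 < 1" by (simp add: abs_square_less_1)
    then show "Ut lam s t \<noteq> 0" unfolding Ut_def using assms by simp
  qed
  fix T assume "T > 0 \<and> (\<exists>u v. solves lam s T u v \<and> u T = 0 \<and> v T < 0 \<and>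
                                   (\<forall>t\<in>{0..<T}. u t \<noteq> 0 \<or> v t \<ge> 0))"
  then obtain u v where T: "T > 0" and sol: "solves lam s T u v" and uT: "u T = 0" by blast
  have "\<forall>t\<in>{0..T}. 0 \<le> u t"
  proof
    fix t assume "t \<in> {0..T}"
    then show "0 \<le> u t" using u_decr[OF assms sol, of t T] uT by (cases "t = T") auto
  qed
  from time_id[OF assms sol this, of T] T uT assms(2)
  have "tau s = sqrt lam * T" unfolding tau_def by simp
  then show "T = tau s / sqrt lam" using assms by simp
qed

definition Pt :: "real \<Rightarrow> real \<Rightarrow> real \<Rightarrow> real \<times> real" where
  "Pt lam c s = (s * (1 - (Wi s c)^2), - sqrt (2 * lam * (G s - G (s * (1 - (Wi s c)^2)))))"

lemma point_eq: assumes "0<lam" "0<s" "s<1" "0 < \<sigma>" "sqrt lam * \<sigma> < tau s" "solves lam s \<sigma> u v"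
  shows "(u \<sigma>, v \<sigma>) = Pt lam (sqrt lam * \<sigma>) s"
proof -
  have u0: "u 0 = s" using assms(6) unfolding solves_def by auto
  have upos: "0 < u \<sigma>"
  proof (rule ccontr)
    assume "\<not> 0 < u \<sigma>"
    then have "u \<sigma> \<le> 0" by simp
    then obtain t' where t': "0 \<le> t'" "t' \<le> \<sigma>" "u t' = 0"
      using IVT2'[of u \<sigma> 0 0] solves_cont(1)[OF assms(6)] u0 assms by auto
    have "t' \<noteq> 0" using t' u0 assms by auto
    then have t'p: "0 < t'" using t' by simp
    have sol': "solves lam s t' u v" by (rule solves_mono[OF assms(6) t'(2)])
    have "\<forall>t\<in>{0..t'}. 0 \<le> u t"
    proof
      fix t assume "t \<in> {0..t'}"
      then show "0 \<le> u t" using u_decr[OF assms(1-3) sol', of t t'] t' by (cases "t = t'") auto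
    qed
    from time_id[OF assms(1-3) sol' this, of t'] t' t'p
    have "tau s = sqrt lam * t'" unfolding tau_def by simp
    also have "\<dots> \<le> sqrt lam * \<sigma>" using t' assms by (intro mult_left_mono) auto
    finally show False using assms(5) by simp
  qed
  have ule: "u \<sigma> \<le> s" using u_decr[OF assms(1-3,6), of 0 \<sigma>] u0 assms by auto
  have "\<forall>t\<in>{0..\<sigma>}. 0 \<le> u t"
  proof
    fix t assume "t \<in> {0..\<sigma>}"
    then show "0 \<le> u t" using u_decr[OF assms(1-3,6), of t \<sigma>] upos by (cases "t = \<sigma>") auto
  qed
  from time_id[OF assms(1-3,6) this, of \<sigma>] assms
  have th: "Th s (sqrt (1 - u \<sigma> / s)) = sqrt lam * \<sigma>" by simp
  define w where "w = sqrt (1 - u \<sigma> / s)"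
  have nn: "0 \<le> 1 - u \<sigma> / s" "1 - u \<sigma> / s \<le> 1" using ule upos assms(2) by (auto simp: field_simps)
  then have w: "0 \<le> w" "w \<le> 1" unfolding w_def by auto
  have w2: "w^2 = 1 - u \<sigma> / s" using nn unfolding w_def by simp
  have "Wi s (sqrt lam * \<sigma>) = w" using Wi_Th[OF assms(2,3), of w] w th unfolding w_def by auto
  then have uw: "u \<sigma> = s * (1 - (Wi s (sqrt lam * \<sigma>))^2)" using w2 assms(2) by (simp add: field_simps)
  have en: "(v \<sigma>)^2 = 2*lam*(G s - G (u \<sigma>))" using energy[OF assms(6), of \<sigma>] assms by (auto simp: algebra_simps)
  have vn: "v \<sigma> < 0" using vneg[OF assms(1-3,6), of \<sigma>] assms by auto
  have "v \<sigma> = - sqrt ((v \<sigma>)^2)" using vn by simp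
  then have "v \<sigma> = - sqrt (2*lam*(G s - G (u \<sigma>)))" using en by simp
  then show ?thesis unfolding Pt_def uw[symmetric] by simp
qed

lemma Gamma0_eq: assumes "0<lam" "0<\<sigma>"
  shows "Gamma0 lam \<sigma> = Pt lam (sqrt lam * \<sigma>) ` {s. 0<s \<and> s<1 \<and> sqrt lam * \<sigma> < tau s}"
proof -
  have I0: "s \<in> I0 lam \<sigma> \<longleftrightarrow> 0<s \<and> s<1 \<and> sqrt lam * \<sigma> < tau s" for s
  proof (cases "0<s \<and> s<1")
    case True
    then have "T0 lam s = tau s / sqrt lam" using T0_eq assms by auto
    then show ?thesis unfolding I0_def using True assms by (simp add: pos_less_divide_eq mult.commute)
  qed (auto simp: I0_def)
  show ?thesis
  proof
    show "Gamma0 lam \<sigma> \<subseteq> Pt lam (sqrt lam * \<sigma>) ` {s. 0<s \<and> s<1 \<and> sqrt lam * \<sigma> < tau s}"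
    proof
      fix p assume "p \<in> Gamma0 lam \<sigma>"
      then obtain s u v where p: "p = (u \<sigma>, v \<sigma>)" "s \<in> I0 lam \<sigma>" "solves lam s \<sigma> u v"
        unfolding Gamma0_def by auto
      then have s: "0<s" "s<1" "sqrt lam * \<sigma> < tau s" using I0 by auto
      show "p \<in> Pt lam (sqrt lam * \<sigma>) ` {s. 0<s \<and> s<1 \<and> sqrt lam * \<sigma> < tau s}"
        using point_eq[OF assms(1) s(1,2) assms(2) s(3) p(3)] p(1) s by auto
    qed
    show "Pt lam (sqrt lam * \<sigma>) ` {s. 0<s \<and> s<1 \<and> sqrt lam * \<sigma> < tau s} \<subseteq> Gamma0 lam \<sigma>"
    proof
      fix p assume "p \<in> Pt lam (sqrt lam * \<sigma>) ` {s. 0<s \<and> s<1 \<and> sqrt lam * \<sigma> < tau s}"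
      then obtain s where s: "0<s" "s<1" "sqrt lam * \<sigma> < tau s" "p = Pt lam (sqrt lam * \<sigma>) s" by auto
      have sol: "solves lam s \<sigma> (Ut lam s) (Vt lam s)" using Ut_sol[OF assms(1) s(1,2)] s(3) by simp
      have "p = (Ut lam s \<sigma>, Vt lam s \<sigma>)" using point_eq[OF assms(1) s(1,2) assms(2) s(3) sol] s(4) by simp
      moreover have "s \<in> I0 lam \<sigma>" using I0 s by auto
      ultimately show "p \<in> Gamma0 lam \<sigma>" using sol unfolding Gamma0_def by blast
    qed
  qed
qed

lemma inv_sqrt_tangent: assumes "0 < y" "0 < z"
  shows "1 / sqrt z - (y - z) / (2 * z * sqrt z) \<le> 1 / sqrt y"
proof -
  define p where "p = sqrt y"
  define q where "q = sqrt z"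
  have p: "p > 0" "y = p^2" using assms unfolding p_def by auto
  have q: "q > 0" "z = q^2" using assms unfolding q_def by auto
  have "1 / p - (1 / q - (p^2 - q^2) / (2 * q^2 * q)) = (p - q)^2 * (p + 2*q) / (2 * p * q^3)"
    using p q by (simp add: field_simps power2_eq_square power3_eq_cube)
  also have "\<dots> \<ge> 0" using p q by (intro divide_nonneg_pos mult_nonneg_nonneg) auto
  finally show ?thesis unfolding p_def[symmetric] q_def[symmetric] using p q by simp
qed

lemma phi_concave: fixes a b t x :: real
  shows "2 * ((1-t)*a + t*b) * Qf ((1-t)*a + t*b) x - ((1-t) * (2*a*Qf a x) + t * (2*b*Qf b x))
       = 2 * ((1+x+x^2+x^3)/4) * t * (1-t) * (a-b)^2"
  unfolding Qf_def by (simp add: field_simps power2_eq_square power3_eq_cube)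

lemma ff_convex: assumes "0<a" "a<1" "0<b" "b<1" "0<t" "t<1" "\<bar>r\<bar> \<le> 1"
  shows "ff ((1-t)*a + t*b) r \<le> (1-t) * ff a r + t * ff b r"
    "a \<noteq> b \<Longrightarrow> ff ((1-t)*a + t*b) r < (1-t) * ff a r + t * ff b r"
proof -
  define m where "m = (1-t)*a + t*b"
  have "(1-t)*a > 0" "t*b > 0" "(1-t)*a < (1-t)*1" "t*b < t*1" using assms by (auto intro: mult_strict_left_mono)
  then have m: "0 < m" "m < 1" unfolding m_def by auto
  define x where "x = 1 - r^2"
  have r6: "\<bar>r\<bar> \<le> 6/5" using assms by simp
  have x: "0 \<le> x" "x \<le> 1" unfolding x_def using assms abs_square_le_1[of r] by auto
  define y1 where "y1 = 2*a*Qf a x"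
  define y2 where "y2 = 2*b*Qf b x"
  define ym where "ym = 2*m*Qf m x"
  have y1: "y1 > 0" unfolding y1_def x_def using Qf_pos_r[OF assms(1,2) r6] assms by simp
  have y2: "y2 > 0" unfolding y2_def x_def using Qf_pos_r[OF assms(3,4) r6] assms by simp
  have ym: "ym > 0" unfolding ym_def x_def using Qf_pos_r[OF m r6] m by simp
  define yb where "yb = (1-t)*y1 + t*y2"
  have yb: "yb > 0" unfolding yb_def using y1 y2 assms by (auto intro: add_pos_pos)
  have "0 \<le> x^2" "0 \<le> x^3" using x by auto
  then have "1+x+x^2+x^3 > 0" using x by linarith
  then have B: "(1+x+x^2+x^3)/4 > 0" by simp
  have diff: "ym - yb = 2 * ((1+x+x^2+x^3)/4) * t * (1-t) * (a-b)^2"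
    using phi_concave[of t a b x] unfolding ym_def yb_def y1_def y2_def m_def by simp
  have "0 \<le> 2 * ((1+x+x^2+x^3)/4) * t * (1-t) * (a-b)^2" using B assms by simp
  then have ymb: "yb \<le> ym" using diff by linarith
  have ff_eq: "ff a r = 2 / sqrt y1" "ff b r = 2 / sqrt y2" "ff m r = 2 / sqrt ym"
    unfolding ff_def y1_def y2_def ym_def x_def by auto
  have tan1: "1 / sqrt yb - (y1 - yb) / (2 * yb * sqrt yb) \<le> 1 / sqrt y1" by (rule inv_sqrt_tangent[OF y1 yb])
  have tan2: "1 / sqrt yb - (y2 - yb) / (2 * yb * sqrt yb) \<le> 1 / sqrt y2" by (rule inv_sqrt_tangent[OF y2 yb])
  have "(1-t) * (1 / sqrt yb - (y1 - yb) / (2 * yb * sqrt yb)) + t * (1 / sqrt yb - (y2 - yb) / (2 * yb * sqrt yb))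
      = 1 / sqrt yb"
  proof -
    have "(1-t) * (y1 - yb) + t * (y2 - yb) = 0" unfolding yb_def by (simp add: algebra_simps)
    then have "(1-t) * ((y1 - yb) / (2 * yb * sqrt yb)) + t * ((y2 - yb) / (2 * yb * sqrt yb)) = 0"
      by (simp add: divide_simps)
    moreover have "\<And>A X Y. (1-t)*(A-X) + t*(A-Y) = A - ((1-t)*X + t*Y)" by (simp add: algebra_simps)
    ultimately show ?thesis by simp
  qed
  then have key: "1 / sqrt yb \<le> (1-t) * (1 / sqrt y1) + t * (1 / sqrt y2)"
    using mult_left_mono[OF tan1, of "1-t"] mult_left_mono[OF tan2, of t] assms by linarith
  have mono: "1 / sqrt ym \<le> 1 / sqrt yb" using ymb yb by (simp add: frac_le)
  define i1 where "i1 = 1 / sqrt y1"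
  define i2 where "i2 = 1 / sqrt y2"
  define im where "im = 1 / sqrt ym"
  define ib where "ib = 1 / sqrt yb"
  have ffe: "ff a r = 2 * i1" "ff b r = 2 * i2" "ff m r = 2 * im"
    unfolding ff_eq i1_def i2_def im_def by auto
  have lin: "(1-t) * (2*i1) + t * (2*i2) = 2 * ((1-t)*i1 + t*i2)" by (simp add: algebra_simps)
  show "ff ((1-t)*a + t*b) r \<le> (1-t) * ff a r + t * ff b r"
  proof -
    have "im \<le> (1-t)*i1 + t*i2" using mono key unfolding i1_def i2_def im_def ib_def by (rule order_trans)
    then show ?thesis unfolding m_def[symmetric] ffe lin by simp
  qed
  assume "a \<noteq> b"
  then have "0 < (a-b)^2" by simp
  then have "0 < 2 * ((1+x+x^2+x^3)/4) * t * (1-t) * (a-b)^2" using B assms by (intro mult_pos_pos) auto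
  then have "yb < ym" using diff by linarith
  then have "1 / sqrt ym < 1 / sqrt yb" using yb by (simp add: frac_less2)
  then show "ff ((1-t)*a + t*b) r < (1-t) * ff a r + t * ff b r"
  proof -
    have "im < (1-t)*i1 + t*i2" using \<open>1 / sqrt ym < 1 / sqrt yb\<close> key
      unfolding i1_def i2_def im_def ib_def by (rule order.strict_trans2)
    then show ?thesis unfolding m_def[symmetric] ffe lin by simp
  qed
qed

lemma intcm: "f integrable_on S \<Longrightarrow> (\<lambda>x. (c::real) * f x) integrable_on S"
  using integrable_cmul[of f S c] by simp

lemma comb_in: fixes a b t :: real assumes "0<a" "a<1" "0<b" "b<1" "0<t" "t<1" shows "0 < (1-t)*a + t*b" "(1-t)*a + t*b < 1"
proof -
  have "(1-t)*a > 0" "t*b > 0" using assms by auto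
  moreover have "(1-t)*a < (1-t)*1" by (rule mult_strict_left_mono) (use assms in auto)
  moreover have "t*b < t*1" by (rule mult_strict_left_mono) (use assms in auto)
  ultimately show "0 < (1-t)*a + t*b" "(1-t)*a + t*b < 1" by auto
qed

lemma Th_comb_int: assumes "0<a" "a<1" "0<b" "b<1" "0 \<le> w" "w \<le> 1"
  shows "integral {0..w} (\<lambda>r. (1-t) * ff a r + t * ff b r) = (1-t) * Th a w + t * Th b w"
proof -
  have ia: "ff a integrable_on {0..w}" and ib: "ff b integrable_on {0..w}"
    using ff_integrable[OF assms(1,2)] ff_integrable[OF assms(3,4)] assms by auto
  have "integral {0..w} (\<lambda>r. (1-t) * ff a r + t * ff b r)
      = integral {0..w} (\<lambda>r. (1-t) * ff a r) + integral {0..w} (\<lambda>r. t * ff b r)"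
    by (rule integral_add) (use ia ib in \<open>auto intro: intcm\<close>)
  also have "\<dots> = (1-t) * integral {0..w} (ff a) + t * integral {0..w} (ff b)"
    using integral_mult[OF ia, of "1-t"] integral_mult[OF ib, of t] by simp
  finally show ?thesis using Th_eq_int assms by simp
qed

lemma Th_convex: assumes "0<a" "a<1" "0<b" "b<1" "0<t" "t<1" "0 \<le> w" "w \<le> 1"
  shows "Th ((1-t)*a + t*b) w \<le> (1-t) * Th a w + t * Th b w"
proof -
  note m = comb_in[OF assms(1-6)]
  have "Th ((1-t)*a + t*b) w = integral {0..w} (ff ((1-t)*a + t*b))" using Th_eq_int[OF m] assms by simp
  also have "\<dots> \<le> integral {0..w} (\<lambda>r. (1-t) * ff a r + t * ff b r)"
  proof (rule integral_le)
    show "ff ((1-t)*a + t*b) integrable_on {0..w}" using ff_integrable[OF m] assms by auto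
    show "(\<lambda>r. (1-t) * ff a r + t * ff b r) integrable_on {0..w}"
      using ff_integrable[OF assms(1,2)] ff_integrable[OF assms(3,4)] assms
      by (auto intro!: integrable_add intcm)
    fix r assume "r \<in> {0..w}"
    then have "\<bar>r\<bar> \<le> 1" using assms by auto
    then show "ff ((1-t)*a + t*b) r \<le> (1-t) * ff a r + t * ff b r" using ff_convex(1)[OF assms(1-6)] by blast
  qed
  also have "\<dots> = (1-t) * Th a w + t * Th b w" by (rule Th_comb_int) (use assms in auto)
  finally show ?thesis .
qed

lemma tau_sconvex: assumes "0<a" "a<1" "0<b" "b<1" "0<t" "t<1" "a \<noteq> b"
  shows "tau ((1-t)*a + t*b) < (1-t) * tau a + t * tau b"
proof -
  note m = comb_in[OF assms(1-6)]
  define d where "d r = (1-t) * ff a r + t * ff b r - ff ((1-t)*a + t*b) r" for r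
  have cd: "continuous_on {0..1} d" unfolding d_def
    using continuous_on_subset[OF cont_ff[OF assms(1,2)]] continuous_on_subset[OF cont_ff[OF assms(3,4)]]
      continuous_on_subset[OF cont_ff[OF m]]
    by (intro continuous_intros) auto
  obtain r0 where r0: "r0 \<in> {0..1}" "\<And>r. r \<in> {0..1} \<Longrightarrow> d r0 \<le> d r"
    using continuous_attains_inf[OF compact_Icc _ cd] by auto
  have "\<bar>r0\<bar> \<le> 1" using r0 by auto
  then have dpos: "d r0 > 0" using ff_convex(2)[OF assms(1-6) _ assms(7)] unfolding d_def by auto
  have ia: "ff a integrable_on {0..1}" "ff b integrable_on {0..1}" "ff ((1-t)*a + t*b) integrable_on {0..1}"
    using ff_integrable[OF assms(1,2)] ff_integrable[OF assms(3,4)] ff_integrable[OF m] by auto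
  have ic: "(\<lambda>r. (1-t) * ff a r + t * ff b r) integrable_on {0..1}"
    using ia by (auto intro!: integrable_add intcm)
  have "d r0 = integral {0..1::real} (\<lambda>_. d r0)" using integral_const_real[of "d r0" 0 1] by simp
  also have "\<dots> \<le> integral {0..1} d"
    by (rule integral_le) (use r0 integrable_continuous_interval[OF cd] in auto)
  also have "\<dots> = integral {0..1} (\<lambda>r. (1-t) * ff a r + t * ff b r) - integral {0..1} (ff ((1-t)*a + t*b))"
    unfolding d_def by (rule integral_diff[OF ic ia(3)])
  also have "\<dots> = (1-t) * tau a + t * tau b - tau ((1-t)*a + t*b)"
    using Th_comb_int[OF assms(1-4), of 1 t] Th_eq_int[OF m, of 1] unfolding tau_def by simp
  finally show ?thesis using dpos by simp
qed

lemma Th_cont_s: assumes "0 \<le> w" "w \<le> 1" shows "continuous_on {0<..<1} (\<lambda>s. Th s w)"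
proof (rule convex_on_continuous)
  show "convex_on {0<..<1} (\<lambda>s. Th s w)"
  proof (rule convex_onI)
    fix t x y :: real assume "0 < t" "t < 1" "x \<in> {0<..<1}" "y \<in> {0<..<1}"
    then show "Th ((1 - t) *\<^sub>R x + t *\<^sub>R y) w \<le> (1 - t) * Th x w + t * Th y w"
      using Th_convex[of x y t w] assms by simp
  qed simp
qed simp

lemma tau_cont: "continuous_on {0<..<1} tau"
  using Th_cont_s[of 1] unfolding tau_def[abs_def] by simp

lemma tau_lower0: assumes "0<s" "s<1" shows "2 / sqrt (2* s) \<le> tau s"
proof -
  have "integral {0..1::real} (\<lambda>_. 2 / sqrt (2* s)) \<le> integral {0..1} (ff s)"
  proof (rule integral_le)
    show "ff s integrable_on {0..1}" using ff_integrable[OF assms] by auto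
    fix r :: real assume r: "r \<in> {0..1}"
    define x where "x = 1 - r^2"
    have x: "0 \<le> x" "x \<le> 1" unfolding x_def using r abs_square_le_1[of r] by auto
    have r6: "\<bar>r\<bar> \<le> 6/5" using r by auto
    have Qp: "Qf s x > 0" using Qf_pos_r[OF assms r6] unfolding x_def .
    have "x^2 \<le> 1" using x by (simp add: abs_square_le_1)
    then have "(1+x+x^2)/3 \<le> 1" using x by simp
    moreover have "0 \<le> s*(1+x+x^2+x^3)/4" using x assms by simp
    ultimately have "Qf s x \<le> 1" unfolding Qf_def by linarith
    then have "2* s*Qf s x \<le> 2* s" using assms by simp
    then have "sqrt (2* s*Qf s x) \<le> sqrt (2* s)" by simp
    moreover have "0 < sqrt (2* s*Qf s x)" using Qp assms by simp
    ultimately have "2 / sqrt (2* s) \<le> 2 / sqrt (2* s*Qf s x)" by (simp add: frac_le)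
    then show "2 / sqrt (2* s) \<le> ff s r" unfolding ff_def x_def .
  qed (rule integrable_const_ivl)
  then show ?thesis using Th_eq_int[OF assms, of 1] unfolding tau_def by simp
qed

lemma tau_big0: "\<exists>\<eta>>0. \<forall>s. 0 < s \<and> s < \<eta> \<longrightarrow> M < tau s"
proof (cases "M \<le> 0")
  case True
  then show ?thesis using tau_pos by (intro exI[of _ 1]) (auto intro: order.strict_trans1)
next
  case False
  then have M: "M > 0" by simp
  show ?thesis
  proof (intro exI[of _ "min (1/2) (1/M^2)"] conjI allI impI)
    show "0 < min (1/2) (1/M^2)" using M by simp
    fix s assume s: "0 < s \<and> s < min (1/2) (1/M^2)"
    then have s1: "0 < s" "s < 1" by auto
    have "2* s < 4/M^2" using s M by (simp add: field_simps)
    then have "sqrt (2* s) < sqrt (4/M^2)" by simp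
    also have "sqrt (4/M^2) = 2/M" using M by (simp add: real_sqrt_divide)
    finally have "sqrt (2* s) < 2/M" .
    then have "M * sqrt (2* s) < 2" using M by (simp add: field_simps)
    then have "M < 2 / sqrt (2* s)" using s1 by (simp add: field_simps)
    then show "M < tau s" using tau_lower0[OF s1] by simp
  qed
qed

lemma Th_half_lower: assumes "0<s" "s<1"
  shows "2 * ln (1/2 + sqrt (2*(1-s))) - 2 * ln (sqrt (2*(1-s))) \<le> Th s (1/2)"
proof -
  define d where "d = sqrt (2*(1-s))"
  have d: "d > 0" "d^2 = 2*(1-s)" using assms unfolding d_def by auto
  have fi: "((\<lambda>r. 2 / (r + d)) has_integral (2 * ln (1/2 + d) - 2 * ln (0 + d))) {0..1/2}"
  proof (rule fundamental_theorem_of_calculus)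
    fix x :: real assume x: "x \<in> {0..1/2}"
    have "((\<lambda>r. 2 * ln (r + d)) has_real_derivative 2 * (1 / (x + d))) (at x within {0..1/2})"
      using x d by (auto intro!: derivative_eq_intros simp: field_simps)
    then show "((\<lambda>r. 2 * ln (r + d)) has_vector_derivative 2 / (x + d)) (at x within {0..1/2})"
      by (simp add: has_real_derivative_iff_has_vector_derivative)
  qed simp
  have "integral {0..1/2} (\<lambda>r. 2 / (r + d)) \<le> integral {0..1/2} (ff s)"
  proof (rule integral_le)
    show "(\<lambda>r. 2 / (r + d)) integrable_on {0..1/2}" using fi by blast
    show "ff s integrable_on {0..1/2}" using ff_integrable[OF assms] by auto
    fix r :: real assume r: "r \<in> {0..1/2}"
    define x where "x = 1 - r^2"
    have x: "0 \<le> x" "x \<le> 1" unfolding x_def using r abs_square_le_1[of r] by auto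
    have r6: "\<bar>r\<bar> \<le> 6/5" using r by auto
    have Qp: "Qf s x > 0" using Qf_pos_r[OF assms r6] unfolding x_def .
    have "x^2 \<le> 1" using x by (simp add: abs_square_le_1)
    have "x^3 \<le> 1" using x by (simp add: power_le_one)
    have a1: "(1-x)*(1+2*x+3*x^2)/12 \<le> (1-x)/2"
    proof -
      have "1+2*x+3*x^2 \<le> 6" using x \<open>x^2 \<le> 1\<close> by linarith
      then have "(1-x)*(1+2*x+3*x^2) \<le> (1-x)*6" using x by (intro mult_left_mono) auto
      then show ?thesis by simp
    qed
    have a2: "(1-s)*(1+x)*(1+x^2)/4 \<le> (1-s)"
    proof -
      have "(1+x)*(1+x^2) \<le> 4" using x \<open>x^2 \<le> 1\<close> \<open>x^3 \<le> 1\<close> by (simp add: algebra_simps power2_eq_square power3_eq_cube)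
      then have "(1-s)*((1+x)*(1+x^2)) \<le> (1-s)*4" using assms by (intro mult_left_mono) auto
      then show ?thesis by (simp add: mult.assoc)
    qed
    have "Qf s x \<le> (1-x)/2 + (1-s)" using a1 a2 Qf_decomp[of s x] by linarith
    then have "2* s*Qf s x \<le> 2*1*((1-x)/2 + (1-s))" using assms Qp
      by (intro mult_mono) auto
    also have "\<dots> = r^2 + d^2" unfolding x_def d(2) by simp
    also have "\<dots> \<le> (r + d)^2" using r d by (simp add: power2_sum)
    finally have "sqrt (2* s*Qf s x) \<le> r + d" using r d
      by (metis real_sqrt_le_mono real_sqrt_abs abs_of_nonneg add_nonneg_nonneg atLeastAtMost_iff less_imp_le)
    moreover have "0 < sqrt (2* s*Qf s x)" using Qp assms by simp
    ultimately have "2 / (r + d) \<le> 2 / sqrt (2* s*Qf s x)" by (simp add: frac_le)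
    then show "2 / (r + d) \<le> ff s r" unfolding ff_def x_def .
  qed
  then show ?thesis using integral_unique[OF fi] Th_eq_int[OF assms, of "1/2"] unfolding d_def by simp
qed

lemma Th_half_big: "\<exists>\<eta>>0. \<forall>s. 1 - \<eta> < s \<and> s < 1 \<longrightarrow> M < Th s (1/2)"
proof -
  define d0 where "d0 = exp (- M/2) / 2"
  have d0: "d0 > 0" unfolding d0_def by simp
  show ?thesis
  proof (intro exI[of _ "min (1/2) (d0^2/2)"] conjI allI impI)
    show "0 < min (1/2) (d0^2/2)" using d0 by simp
    fix s assume s0: "1 - min (1/2) (d0^2/2) < s \<and> s < 1"
    then have s: "1 - d0^2/2 < s" "s < 1" by auto
    have s1: "0 < s" "s < 1" using s0 by auto
    define d where "d = sqrt (2*(1-s))"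
    have d: "0 < d" using s unfolding d_def by auto
    have "d^2 < d0^2" using s unfolding d_def by auto
    then have "d < d0" using d d0 by (meson abs_less_iff abs_square_less_1 power_less_imp_less_base less_imp_le)
    then have "ln d < ln d0" using d by simp
    also have "ln d0 = - M/2 - ln 2" unfolding d0_def by (simp add: ln_div)
    finally have l1: "M < 2 * (- ln 2) - 2 * ln d" by simp
    have "ln (1/2) \<le> ln (1/2 + d)" using d by simp
    then have "M < 2 * ln (1/2 + d) - 2 * ln d" using l1 by (simp add: ln_div)
    then show "M < Th s (1/2)" using Th_half_lower[OF s1] unfolding d_def by simp
  qed
qed

lemma Wi_range: assumes "0<s" "s<1" "0 \<le> y" "y < tau s"
  shows "0 \<le> Wi s y" "Wi s y < 1" "Th s (Wi s y) = y"
  using Wt_range[of s 1 y] assms unfolding Wt_def by auto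

lemma Wi_lt: assumes "0<s" "s<1" "0 \<le> y" "y < tau s" "0 \<le> w" "w \<le> 1" "y < Th s w"
  shows "Wi s y < w"
proof (rule ccontr)
  assume "\<not> Wi s y < w"
  then have "Th s w \<le> Th s (Wi s y)" using Th_mono_le[OF assms(1,2), of w "Wi s y"] Wi_range[OF assms(1-4)] assms by auto
  then show False using Wi_range[OF assms(1-4)] assms by auto
qed

lemma Wi_gt: assumes "0<s" "s<1" "0 \<le> y" "y < tau s" "0 \<le> w" "w \<le> 1" "Th s w < y"
  shows "w < Wi s y"
proof (rule ccontr)
  assume "\<not> w < Wi s y"
  then have "Th s (Wi s y) \<le> Th s w" using Th_mono_le[OF assms(1,2), of "Wi s y" w] Wi_range[OF assms(1-4)] assms by auto
  then show False using Wi_range[OF assms(1-4)] assms by auto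
qed

lemma tau_quasi: assumes "0<a" "a<x" "x<b" "b<1" shows "tau x < max (tau a) (tau b)"
proof -
  define t where "t = (x-a)/(b-a)"
  have t: "0 < t" "t < 1" using assms unfolding t_def by (auto simp: field_simps)
  have "b - a > 0" using assms by simp
  then have e: "t*(b-a) = x - a" unfolding t_def by simp
  have "(1-t)*a + t*b = a + t*(b-a)" by (simp add: algebra_simps)
  then have x: "x = (1-t)*a + t*b" using e by simp
  have "tau x < (1-t) * tau a + t * tau b" unfolding x by (rule tau_sconvex) (use assms t in auto)
  also have "\<dots> \<le> (1-t) * max (tau a) (tau b) + t * max (tau a) (tau b)"
    using t by (intro add_mono mult_left_mono) auto
  also have "\<dots> = max (tau a) (tau b)" by (simp add: algebra_simps)
  finally show ?thesis .
qed

lemma tau_side: assumes "0<s0" "s0<1"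
  shows "(\<forall>s. 0<s \<and> s<s0 \<longrightarrow> tau s0 < tau s) \<or> (\<forall>s. s0<s \<and> s<1 \<longrightarrow> tau s0 < tau s)"
proof (rule ccontr)
  assume "\<not> ?thesis"
  then obtain a b where a: "0<a" "a<s0" "tau a \<le> tau s0" and b: "s0<b" "b<1" "tau b \<le> tau s0"
    by (auto simp: not_less)
  have "tau s0 < max (tau a) (tau b)" by (rule tau_quasi) (use a b in auto)
  then show False using a b by auto
qed

lemma isCont_Th_s: assumes "0 \<le> w" "w \<le> 1" "0<s" "s<1" shows "isCont (\<lambda>s. Th s w) s"
proof -
  have "\<forall>x\<in>{0<..<1::real}. isCont (\<lambda>s. Th s w) x"
    using Th_cont_s[OF assms(1,2)] continuous_on_eq_continuous_at[OF open_greaterThanLessThan] by blast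
  then show ?thesis using assms by auto
qed

lemma isCont_tau: assumes "0<s" "s<1" shows "isCont tau s"
  using isCont_Th_s[of 1 s] assms unfolding tau_def[abs_def] by auto

lemma isCont_G: "isCont G x"
  using G_deriv DERIV_isCont by blast

lemma closure_sup: assumes "0<lam" "0<\<sigma>" "0<s0" "s0<1" "tau s0 = sqrt lam * \<sigma>"
  shows "(0, - sqrt (2*lam*G s0)) \<in> closure (Gamma0 lam \<sigma>)"
proof -
  define c where "c = sqrt lam * \<sigma>"
  have c0: "0 \<le> c" using assms unfolding c_def by simp
  have main: "(0, - sqrt (2*lam*G s0)) \<in> closure (Gamma0 lam \<sigma>)"
    if F: "F \<noteq> bot" "F \<le> at s0" and ev: "eventually (\<lambda>s. 0<s \<and> s<1 \<and> c < tau s) F" for F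
  proof (rule Lim_in_closed_set[OF closed_closure _ F(1)])
    show "eventually (\<lambda>s. Pt lam c s \<in> closure (Gamma0 lam \<sigma>)) F"
      using ev Gamma0_eq[OF assms(1,2)] unfolding c_def[symmetric]
      by (auto elim!: eventually_mono intro: closure_subset[THEN subsetD])
    have W: "((\<lambda>s. Wi s c) \<longlongrightarrow> 1) F"
    proof (rule tendstoI)
      fix e :: real assume e: "e > 0"
      define w' where "w' = max 0 (1 - e/2)"
      have w': "0 \<le> w'" "w' < 1" "1 - w' < e" using e unfolding w'_def by auto
      have "Th s0 w' < Th s0 1" using Th_strict_mono[OF assms(3,4), of w' 1] w' by auto
      then have lt: "Th s0 w' < c" using assms unfolding tau_def c_def by simp
      have "((\<lambda>s. Th s w') \<longlongrightarrow> Th s0 w') (at s0)"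
        using isCont_Th_s[of w' s0] w' assms by (simp add: isCont_def)
      then have "eventually (\<lambda>s. Th s w' < c) (at s0)" using lt by (rule order_tendstoD)
      then have "eventually (\<lambda>s. Th s w' < c) F" using F(2) by (rule filter_leD[rotated])
      then show "eventually (\<lambda>s. dist (Wi s c) 1 < e) F" using ev
      proof (eventually_elim)
        case (elim s)
        then have "w' < Wi s c" "Wi s c < 1" using Wi_gt[of s c w'] Wi_range[of s c] w' c0 by auto
        then show ?case using w' by (simp add: dist_real_def)
      qed
    qed
    have S: "((\<lambda>s. s) \<longlongrightarrow> s0) F" using F(2) by (rule tendsto_mono) simp
    have GS: "((\<lambda>s. G s) \<longlongrightarrow> G s0) F" using isCont_tendsto_compose[OF isCont_G S] .
    have A: "((\<lambda>s. s * (1 - (Wi s c)^2)) \<longlongrightarrow> s0 * (1 - 1^2)) F"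
      by (intro tendsto_intros S W)
    have "((\<lambda>s. G (s * (1 - (Wi s c)^2))) \<longlongrightarrow> G (s0 * (1 - 1^2))) F"
      by (rule isCont_tendsto_compose[OF isCont_G A])
    then have B: "((\<lambda>s. - sqrt (2 * lam * (G s - G (s * (1 - (Wi s c)^2))))) \<longlongrightarrow> - sqrt (2*lam*(G s0 - G 0))) F"
      by (auto intro!: tendsto_intros GS)
    have "(Pt lam c \<longlongrightarrow> (s0 * (1 - 1^2), - sqrt (2*lam*(G s0 - G 0)))) F"
      unfolding Pt_def[abs_def] by (rule tendsto_Pair[OF A B])
    then show "(Pt lam c \<longlongrightarrow> (0, - sqrt (2*lam*G s0))) F" by (simp add: G_def)
  qed
  from tau_side[OF assms(3,4)] show ?thesis
  proof
    assume L: "\<forall>s. 0<s \<and> s<s0 \<longrightarrow> tau s0 < tau s"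
    show ?thesis
    proof (rule main)
      show "at_left s0 \<noteq> bot" by simp
      show "at_left s0 \<le> at s0" by (simp add: at_le)
      have "eventually (\<lambda>s. s \<in> {0<..<s0}) (at_left s0)" using assms(3) by (rule eventually_at_left_real)
      then show "eventually (\<lambda>s. 0<s \<and> s<1 \<and> c < tau s) (at_left s0)"
        by eventually_elim (use L assms c_def in auto)
    qed
  next
    assume R: "\<forall>s. s0<s \<and> s<1 \<longrightarrow> tau s0 < tau s"
    show ?thesis
    proof (rule main)
      show "at_right s0 \<noteq> bot" by simp
      show "at_right s0 \<le> at s0" by (simp add: at_le)
      have "eventually (\<lambda>s. s \<in> {s0<..<1}) (at_right s0)" using assms(4) by (rule eventually_at_right_real)
      then show "eventually (\<lambda>s. 0<s \<and> s<1 \<and> c < tau s) (at_right s0)"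
        by eventually_elim (use R assms c_def in auto)
    qed
  qed
qed

lemma closure_sub: assumes "0<lam" "0<\<sigma>" "(0,y) \<in> closure (Gamma0 lam \<sigma>)" "y < 0"
  shows "\<exists>s0. 0<s0 \<and> s0<1 \<and> tau s0 = sqrt lam * \<sigma> \<and> y = - sqrt (2*lam*G s0)"
proof -
  define c where "c = sqrt lam * \<sigma>"
  have c0: "0 \<le> c" using assms unfolding c_def by simp
  obtain f where f: "\<And>n. f n \<in> Gamma0 lam \<sigma>" "f \<longlonglongrightarrow> (0,y)"
    using assms(3) unfolding closure_sequential by blast
  have "\<forall>n. \<exists>s. 0<s \<and> s<1 \<and> c < tau s \<and> f n = Pt lam c s"
    using f(1) Gamma0_eq[OF assms(1,2)] unfolding c_def[symmetric] by blast
  then obtain sq where sq: "\<And>n. 0 < sq n" "\<And>n. sq n < 1" "\<And>n. c < tau (sq n)" "\<And>n. f n = Pt lam c (sq n)"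
    by metis
  define W where "W n = Wi (sq n) c" for n
  define a where "a n = sq n * (1 - (W n)^2)" for n
  define b where "b n = - sqrt (2 * lam * (G (sq n) - G (a n)))" for n
  have fab: "f n = (a n, b n)" for n unfolding sq(4) Pt_def a_def b_def W_def by simp
  have W: "0 \<le> W n" "W n < 1" for n using Wi_range[OF sq(1,2) c0 sq(3)] unfolding W_def by auto
  have W2: "(W n)^2 < 1" for n using W[of n] by (simp add: abs_square_less_1)
  have apos: "0 < a n" "a n \<le> sq n" for n using W[of n] W2[of n] sq(1)[of n] unfolding a_def
    by (auto simp: mult_le_cancel_left1)
  have en: "G (sq n) = (b n)^2 / (2*lam) + G (a n)" for n
  proof -
    have "G (a n) \<le> G (sq n)" using G_strict_mono[of "a n" "sq n"] apos[of n] sq(2)[of n]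
      by (cases "a n = sq n") auto
    then have "(b n)^2 = 2 * lam * (G (sq n) - G (a n))" unfolding b_def using assms(1) by simp
    then show ?thesis using assms(1) by (simp add: field_simps)
  qed
  have fa: "a \<longlonglongrightarrow> 0" and fb: "b \<longlonglongrightarrow> y"
    using tendsto_fst[OF f(2)] tendsto_snd[OF f(2)] unfolding fab by auto
  have "\<forall>n. sq n \<in> {0..1}" using sq(1,2) less_imp_le by auto
  then obtain l r where l: "l \<in> {0..1}" and r: "strict_mono r" and lr: "(sq \<circ> r) \<longlonglongrightarrow> l"
    using seq_compactE[OF compact_imp_seq_compact[OF compact_Icc]] by metis
  have lr': "(\<lambda>n. sq (r n)) \<longlonglongrightarrow> l" using lr by (simp add: comp_def)
  have ar: "(\<lambda>n. a (r n)) \<longlonglongrightarrow> 0" using LIMSEQ_subseq_LIMSEQ[OF fa r] by (simp add: comp_def)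
  have br: "(\<lambda>n. b (r n)) \<longlonglongrightarrow> y" using LIMSEQ_subseq_LIMSEQ[OF fb r] by (simp add: comp_def)
  have G1: "(\<lambda>n. G (sq (r n))) \<longlonglongrightarrow> G l" by (rule isCont_tendsto_compose[OF isCont_G lr'])
  have "(\<lambda>n. (b (r n))^2 / (2*lam) + G (a (r n))) \<longlonglongrightarrow> y^2 / (2*lam) + G 0"
    by (intro tendsto_intros br isCont_tendsto_compose[OF isCont_G ar]) (use assms(1) in simp)
  then have G2: "(\<lambda>n. G (sq (r n))) \<longlonglongrightarrow> y^2 / (2*lam)" unfolding en by (simp add: G_def)
  have Gl: "G l = y^2 / (2*lam)" using LIMSEQ_unique[OF G1 G2] .
  have "y^2 > 0" using assms(4) by simp
  then have "G l > 0" using Gl assms(1) by simp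
  then have l0: "l \<noteq> 0" by (auto simp: G_def)
  have lne1: "l \<noteq> 1"
  proof
    assume l1: "l = 1"
    obtain \<eta> where eta: "\<eta> > 0" "\<And>s. 1 - \<eta> < s \<and> s < 1 \<Longrightarrow> c < Th s (1/2)"
      using Th_half_big[of c] by blast
    have "max (1 - \<eta>) (2/3) < l" using eta l1 by simp
    then have ev1: "eventually (\<lambda>n. max (1 - \<eta>) (2/3) < sq (r n)) sequentially"
      by (rule order_tendstoD(1)[OF lr'])
    have ev2: "eventually (\<lambda>n. a (r n) < 1/2) sequentially" using ar by (rule order_tendstoD) simp
    have "eventually (\<lambda>n. False) sequentially" using ev1 ev2
    proof eventually_elim
      case (elim n)
      define s where "s = sq (r n)"
      have s: "1 - \<eta> < s" "2/3 < s" "s < 1" "0 < s" using elim sq(1,2) unfolding s_def by auto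
      have "c < Th s (1/2)" using eta(2) s by auto
      then have "W (r n) < 1/2" using Wi_lt[OF s(4,3) c0 sq(3)[of "r n", folded s_def], of "1/2"]
        unfolding W_def s_def by auto
      then have "(W (r n))^2 < (1/2)^2" using W[of "r n"] by (intro power_strict_mono) auto
      then have "(W (r n))^2 < 1/4" by (simp add: power2_eq_square)
      then have m: "s * (3/4) \<le> s * (1 - (W (r n))^2)" using s by (intro mult_left_mono) auto
      have "1/2 < s * (3/4)" using s by simp
      then have "1/2 \<le> a (r n)" using m unfolding a_def s_def by linarith
      then show False using elim by simp
    qed
    then show False by simp
  qed
  have l01: "0 < l" "l < 1" using l l0 lne1 by auto
  have taur: "(\<lambda>n. tau (sq (r n))) \<longlonglongrightarrow> tau l" by (rule isCont_tendsto_compose[OF isCont_tau[OF l01] lr'])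
  have "c \<le> tau l"
  proof (rule tendsto_le[OF _ taur tendsto_const])
    show "\<forall>\<^sub>F x in sequentially. c \<le> tau (sq (r x))" using sq(3) less_imp_le by (intro always_eventually) blast
  qed simp
  moreover have "\<not> c < tau l"
  proof
    assume cl: "c < tau l"
    define w0 where "w0 = Wi l c"
    have w0: "0 \<le> w0" "w0 < 1" "Th l w0 = c" using Wi_range[OF l01 c0 cl] unfolding w0_def by auto
    define w' where "w' = (w0 + 1) / 2"
    have w': "w0 < w'" "w' < 1" "0 \<le> w'" using w0 unfolding w'_def by auto
    have "Th l w0 < Th l w'" using Th_strict_mono[OF l01, of w0 w'] w0 w' by auto
    then have cw: "c < Th l w'" using w0 by simp
    have "(\<lambda>n. Th (sq (r n)) w') \<longlonglongrightarrow> Th l w'"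
      by (rule isCont_tendsto_compose[where g="\<lambda>s. Th s w'", OF isCont_Th_s lr']) (use w' l01 in auto)
    then have ev1: "eventually (\<lambda>n. c < Th (sq (r n)) w') sequentially" using cw by (rule order_tendstoD)
    have ev2: "eventually (\<lambda>n. l/2 < sq (r n)) sequentially" using lr' by (rule order_tendstoD) (use l01 in simp)
    define \<kappa> where "\<kappa> = l/2 * (1 - w'^2)"
    have "w'^2 < 1" using w' by (simp add: abs_square_less_1)
    then have kp: "\<kappa> > 0" using l01 unfolding \<kappa>_def by simp
    have ev3: "eventually (\<lambda>n. a (r n) < \<kappa>) sequentially" using ar kp by (rule order_tendstoD)
    have "eventually (\<lambda>n. False) sequentially" using ev1 ev2 ev3
    proof eventually_elim
      case (elim n)
      define s where "s = sq (r n)"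
      have s: "l/2 < s" "s < 1" "0 < s" using elim sq(1,2) unfolding s_def by auto
      have "W (r n) < w'" using Wi_lt[OF s(3,2) c0 sq(3)[of "r n", folded s_def], of w'] elim w'
        unfolding W_def s_def by auto
      then have "(W (r n))^2 < w'^2" using W[of "r n"] by (simp add: power_strict_mono)
      then have "1 - w'^2 \<le> 1 - (W (r n))^2" by simp
      moreover have "0 \<le> 1 - w'^2" using \<open>w'^2 < 1\<close> by simp
      ultimately have "l/2 * (1 - w'^2) \<le> s * (1 - (W (r n))^2)" using s
        by (intro mult_mono) auto
      then have "\<kappa> \<le> a (r n)" unfolding \<kappa>_def a_def s_def by simp
      then show False using elim by simp
    qed
    then show False by simp
  qed
  ultimately have tl: "tau l = c" by simp
  have "y = - sqrt (y^2)" using assms(4) by simp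
  also have "y^2 = 2*lam*G l" using Gl assms(1) by (simp add: field_simps)
  finally show ?thesis using l01 tl unfolding c_def by blast
qed

lemma G_pos: assumes "0<s" "s<1" shows "0 < G s"
  using G_strict_mono[of 0 s] assms by (simp add: G_def)

lemma closure_axis: assumes "0<lam" "0<\<sigma>"
  shows "closure (Gamma0 lam \<sigma>) \<inter> ({0} \<times> {..<0}) =
    (\<lambda>s. (0::real, - sqrt (2*lam*G s))) ` {s. 0<s \<and> s<1 \<and> tau s = sqrt lam * \<sigma>}"
proof
  show "closure (Gamma0 lam \<sigma>) \<inter> ({0} \<times> {..<0}) \<subseteq>
    (\<lambda>s. (0::real, - sqrt (2*lam*G s))) ` {s. 0<s \<and> s<1 \<and> tau s = sqrt lam * \<sigma>}"
  proof
    fix p assume p: "p \<in> closure (Gamma0 lam \<sigma>) \<inter> ({0} \<times> {..<0})"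
    then obtain y where y: "p = (0,y)" "y < 0" by auto
    then obtain s0 where "0<s0 \<and> s0<1 \<and> tau s0 = sqrt lam * \<sigma> \<and> y = - sqrt (2*lam*G s0)"
      using closure_sub[OF assms, of y] p by auto
    then show "p \<in> (\<lambda>s. (0::real, - sqrt (2*lam*G s))) ` {s. 0<s \<and> s<1 \<and> tau s = sqrt lam * \<sigma>}"
      using y by auto
  qed
  show "(\<lambda>s. (0::real, - sqrt (2*lam*G s))) ` {s. 0<s \<and> s<1 \<and> tau s = sqrt lam * \<sigma>} \<subseteq>
    closure (Gamma0 lam \<sigma>) \<inter> ({0} \<times> {..<0})"
  proof
    fix p assume "p \<in> (\<lambda>s. (0::real, - sqrt (2*lam*G s))) ` {s. 0<s \<and> s<1 \<and> tau s = sqrt lam * \<sigma>}"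
    then obtain s0 where s0: "0<s0" "s0<1" "tau s0 = sqrt lam * \<sigma>" "p = (0::real, - sqrt (2*lam*G s0))" by auto
    have "0 < G s0" by (rule G_pos[OF s0(1,2)])
    then have "- sqrt (2*lam*G s0) < 0" using assms by simp
    then show "p \<in> closure (Gamma0 lam \<sigma>) \<inter> ({0} \<times> {..<0})"
      using closure_sup[OF assms s0(1-3)] s0(4) by auto
  qed
qed

lemma tau_min: "\<exists>sm. 0 < sm \<and> sm < 1 \<and> (\<forall>s. 0<s \<and> s<1 \<longrightarrow> tau sm \<le> tau s)"
proof -
  obtain e0 where e0: "e0 > 0" "\<And>s. 0 < s \<and> s < e0 \<Longrightarrow> tau (1/2) < tau s" using tau_big0[of "tau (1/2)"] by blast
  obtain e1 where e1: "e1 > 0" "\<And>s. 1 - e1 < s \<and> s < 1 \<Longrightarrow> tau (1/2) < Th s (1/2)"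
    using Th_half_big[of "tau (1/2)"] by blast
  define a where "a = min (e0/2) (1/4)"
  define b where "b = max (1 - e1/2) (3/4)"
  have "a \<le> e0/2" "a \<le> 1/4" "0 < a" using e0 unfolding a_def by auto
  moreover have "1 - e1/2 \<le> b" "3/4 \<le> b" "b < 1" using e1 unfolding b_def by auto
  ultimately have ab: "0 < a" "a < 1/2" "1/2 < b" "b < 1" "a < e0" "1 - e1 < b" using e0 e1 by linarith+
  have "continuous_on {a..b} tau" by (rule continuous_on_subset[OF tau_cont]) (use ab in auto)
  then obtain sm where sm: "sm \<in> {a..b}" "\<And>s. s \<in> {a..b} \<Longrightarrow> tau sm \<le> tau s"
    using continuous_attains_inf[of "{a..b}" tau] ab by auto
  have h: "tau sm \<le> tau (1/2)" using sm ab by auto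
  show ?thesis
  proof (intro exI conjI allI impI)
    show "0 < sm" "sm < 1" using sm ab by auto
    fix s :: real assume s: "0 < s \<and> s < 1"
    show "tau sm \<le> tau s"
    proof (cases "s < a")
      case True then show ?thesis using e0(2)[of s] s ab h by auto
    next
      case False
      show ?thesis
      proof (cases "b < s")
        case True
        then have "tau (1/2) < Th s (1/2)" using e1(2)[of s] s ab by auto
        moreover have "Th s (1/2) \<le> tau s" unfolding tau_def using Th_mono_le[of s "1/2" 1] s by auto
        ultimately show ?thesis using h by auto
      next
        case False then show ?thesis using sm(2)[of s] \<open>\<not> s < a\<close> by auto
      qed
    qed
  qed
qed

lemma level_min: assumes "0<sm" "sm<1" "\<forall>s. 0<s \<and> s<1 \<longrightarrow> tau sm \<le> tau s"
  shows "{s. 0<s \<and> s<1 \<and> tau s = tau sm} = {sm}"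
proof
  show "{sm} \<subseteq> {s. 0<s \<and> s<1 \<and> tau s = tau sm}" using assms by auto
  show "{s. 0<s \<and> s<1 \<and> tau s = tau sm} \<subseteq> {sm}"
  proof
    fix s assume s: "s \<in> {s. 0<s \<and> s<1 \<and> tau s = tau sm}"
    show "s \<in> {sm}"
    proof (rule ccontr)
      assume "s \<notin> {sm}"
      then have ne: "s \<noteq> sm" by simp
      define x where "x = (s + sm)/2"
      have "tau x < max (tau (min s sm)) (tau (max s sm))"
        by (rule tau_quasi) (use s ne assms in \<open>auto simp: x_def min_def max_def\<close>)
      moreover have "tau (min s sm) = tau sm" "tau (max s sm) = tau sm" using s by (auto simp: min_def max_def)
      moreover have "tau sm \<le> tau x" using assms(3) s assms(1,2) unfolding x_def by auto
      ultimately show False by simp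
    qed
  qed
qed

lemma level_two: assumes "0<sm" "sm<1" "\<forall>s. 0<s \<and> s<1 \<longrightarrow> tau sm \<le> tau s" "tau sm < c"
  shows "\<exists>s0 s1. 0<s0 \<and> s0<s1 \<and> s1<1 \<and> {s. 0<s \<and> s<1 \<and> tau s = c} = {s0,s1}"
proof -
  obtain e0 where e0: "e0 > 0" "\<And>s. 0 < s \<and> s < e0 \<Longrightarrow> c < tau s" using tau_big0[of c] by blast
  obtain e1 where e1: "e1 > 0" "\<And>s. 1 - e1 < s \<and> s < 1 \<Longrightarrow> c < Th s (1/2)"
    using Th_half_big[of c] by blast
  define a where "a = min (e0/2) (sm/2)"
  define b where "b = max (1 - e1/2) ((sm+1)/2)"
  have "a \<le> e0/2" "a \<le> sm/2" "0 < a" using e0 assms unfolding a_def by auto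
  moreover have "1 - e1/2 \<le> b" "(sm+1)/2 \<le> b" "b < 1" using e1 assms unfolding b_def by auto
  ultimately have ab: "0 < a" "a < sm" "sm < b" "b < 1" "a < e0" "1 - e1 < b" using e0 e1 assms(1,2)
    by (auto simp: field_simps)
  have ta: "c < tau a" using e0(2)[of a] ab by auto
  have "c < Th b (1/2)" using e1(2)[of b] ab by auto
  moreover have "Th b (1/2) \<le> tau b" unfolding tau_def using Th_mono_le[of b "1/2" 1] ab assms by auto
  ultimately have tb: "c < tau b" by simp
  have "continuous_on {a..sm} tau" by (rule continuous_on_subset[OF tau_cont]) (use ab assms in auto)
  then obtain s0 where s0: "a \<le> s0" "s0 \<le> sm" "tau s0 = c"
    using IVT2'[of tau sm c a] ta assms ab by auto
  have "continuous_on {sm..b} tau" by (rule continuous_on_subset[OF tau_cont]) (use ab assms in auto)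
  then obtain s1 where s1: "sm \<le> s1" "s1 \<le> b" "tau s1 = c"
    using IVT'[of tau sm c b] tb assms ab by auto
  have s0s: "s0 < sm" using s0 assms by (cases "s0 = sm") auto
  have s1s: "sm < s1" using s1 assms by (cases "s1 = sm") auto
  have s0p: "0 < s0" and s1p: "s1 < 1" using s0 s1 ab by auto
  show ?thesis
  proof (intro exI conjI)
    show "0 < s0" "s0 < s1" "s1 < 1" using s0p s0s s1s s1p by auto
    show "{s. 0<s \<and> s<1 \<and> tau s = c} = {s0,s1}"
    proof
      show "{s0,s1} \<subseteq> {s. 0<s \<and> s<1 \<and> tau s = c}" using s0p s0s s1s s1p s0 s1 assms by auto
      show "{s. 0<s \<and> s<1 \<and> tau s = c} \<subseteq> {s0,s1}"
      proof
        fix s assume s: "s \<in> {s. 0<s \<and> s<1 \<and> tau s = c}"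
        then have sne: "s \<noteq> sm" using assms by auto
        show "s \<in> {s0,s1}"
        proof (cases "s < sm")
          case True
          have "s = s0"
          proof (rule ccontr)
            assume "s \<noteq> s0"
            then consider "s < s0" | "s0 < s" by linarith
            then show False
            proof cases
              case 1
              have "tau s0 < max (tau s) (tau sm)" by (rule tau_quasi) (use 1 s s0s assms in auto)
              then show False using s s0 assms by auto
            next
              case 2
              have "tau s < max (tau s0) (tau sm)" by (rule tau_quasi) (use 2 s0p True assms in auto)
              then show False using s s0 assms by auto
            qed
          qed
          then show ?thesis by simp
        next
          case False
          then have "sm < s" using sne by simp
          have "s = s1"
          proof (rule ccontr)
            assume "s \<noteq> s1"
            then consider "s < s1" | "s1 < s" by linarith
            then show False
            proof cases
              case 1
              have "tau s < max (tau sm) (tau s1)" by (rule tau_quasi) (use 1 \<open>sm < s\<close> s1p assms in auto)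
              then show False using s s1 assms by auto
            next
              case 2
              have "tau s1 < max (tau sm) (tau s)" by (rule tau_quasi) (use 2 s s1s assms in auto)
              then show False using s s1 assms by auto
            qed
          qed
          then show ?thesis by simp
        qed
      qed
    qed
  qed
qed

theorem corollary2p1:
  fixes \<sigma> :: real
  assumes "0 < \<sigma>" and "\<sigma> < 1/2"
  shows "\<exists>lams > 0.
     (\<forall>lam. 0 < lam \<and> lam < lams \<longrightarrow>
        closure (Gamma0 lam \<sigma>) \<inter> ({0} \<times> {..<0}) = {}) \<and>
     (\<exists>\<xi>. 0 < \<xi> \<and> closure (Gamma0 lams \<sigma>) \<inter> ({0} \<times> {..<0}) = {(0, -\<xi>)}) \<and>
     (\<forall>lam. lam > lams \<longrightarrow> (\<exists>\<xi>0 \<xi>1. 0 < \<xi>0 \<and> \<xi>0 < \<xi>1 \<and>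
        closure (Gamma0 lam \<sigma>) \<inter> ({0} \<times> {..<0}) = {(0, -\<xi>0), (0, -\<xi>1)}))"
proof -
  obtain sm where sm: "0<sm" "sm<1" "\<forall>s. 0<s \<and> s<1 \<longrightarrow> tau sm \<le> tau s" using tau_min by blast
  define m where "m = tau sm"
  have m: "0 < m" using tau_pos[OF sm(1,2)] unfolding m_def .
  define lams where "lams = (m/\<sigma>)^2"
  have lams: "0 < lams" using m assms unfolding lams_def by simp
  have slams: "sqrt lams = m/\<sigma>" using m assms unfolding lams_def by simp
  have cmp: "sqrt lam * \<sigma> < m \<longleftrightarrow> lam < lams" "m < sqrt lam * \<sigma> \<longleftrightarrow> lams < lam" if "0 < lam" for lam
  proof -
    have "sqrt lam * \<sigma> < m \<longleftrightarrow> sqrt lam < m/\<sigma>" using assms by (simp add: pos_less_divide_eq)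
    also have "\<dots> \<longleftrightarrow> lam < lams" unfolding slams[symmetric] by simp
    finally show "sqrt lam * \<sigma> < m \<longleftrightarrow> lam < lams" .
    have "m < sqrt lam * \<sigma> \<longleftrightarrow> m/\<sigma> < sqrt lam" using assms by (simp add: pos_divide_less_eq)
    also have "\<dots> \<longleftrightarrow> lams < lam" unfolding slams[symmetric] using that lams by simp
    finally show "m < sqrt lam * \<sigma> \<longleftrightarrow> lams < lam" .
  qed
  show ?thesis
  proof (rule exI[of _ lams], intro conjI allI impI)
    show "0 < lams" by fact
  next
    fix lam assume lam: "0 < lam \<and> lam < lams"
    then have c: "sqrt lam * \<sigma> < m" using cmp by auto
    have "{s. 0<s \<and> s<1 \<and> tau s = sqrt lam * \<sigma>} = {}" using c sm(3) unfolding m_def by force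
    then show "closure (Gamma0 lam \<sigma>) \<inter> ({0} \<times> {..<0}) = {}"
      using closure_axis[OF _ assms(1), of lam] lam by simp
  next
    have "sqrt lams * \<sigma> = m" using slams assms by simp
    then have "closure (Gamma0 lams \<sigma>) \<inter> ({0} \<times> {..<0}) = (\<lambda>s. (0::real, - sqrt (2*lams*G s))) ` {sm}"
      using closure_axis[OF lams assms(1)] level_min[OF sm] unfolding m_def by simp
    moreover have "0 < sqrt (2*lams*G sm)" using G_pos[OF sm(1,2)] lams by simp
    ultimately show "\<exists>\<xi>. 0 < \<xi> \<and> closure (Gamma0 lams \<sigma>) \<inter> ({0} \<times> {..<0}) = {(0, -\<xi>)}" by auto
  next
    fix lam assume lam: "lams < lam"
    then have lp: "0 < lam" using lams by simp
    then have c: "m < sqrt lam * \<sigma>" using cmp lam by auto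
    obtain s0 s1 where ss: "0<s0" "s0<s1" "s1<1" "{s. 0<s \<and> s<1 \<and> tau s = sqrt lam * \<sigma>} = {s0,s1}"
      using level_two[OF sm c[unfolded m_def]] by blast
    have "closure (Gamma0 lam \<sigma>) \<inter> ({0} \<times> {..<0}) = (\<lambda>s. (0::real, - sqrt (2*lam*G s))) ` {s0,s1}"
      using closure_axis[OF lp assms(1)] ss(4) by simp
    moreover have "0 < sqrt (2*lam*G s0)" using G_pos[of s0] ss lp by simp
    moreover have "sqrt (2*lam*G s0) < sqrt (2*lam*G s1)" using G_strict_mono[of s0 s1] ss lp by simp
    ultimately show "\<exists>\<xi>0 \<xi>1. 0 < \<xi>0 \<and> \<xi>0 < \<xi>1 \<and>
        closure (Gamma0 lam \<sigma>) \<inter> ({0} \<times> {..<0}) = {(0, -\<xi>0), (0, -\<xi>1)}"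
      by (intro exI[of _ "sqrt (2*lam*G s0)"] exI[of _ "sqrt (2*lam*G s1)"]) simp
  qed
qed

end
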